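(* Let $1<p<\infty$ and $p'=p/(p-1)$. For every integrable $f$ on $Q_0$, \[ \|f\|_{GaRo_p}\le p'\,\|f\|_{GaRo_{L(p,\infty)}}. \] In particular $GaRo_{L(p,\infty)}\subset GaRo_p$.
   Context: $Q_0=(0,1)^n$; cubes are subcubes of $Q_0$ with sides parallel to the axes. $P$ is the set of countable families $\{Q_i\}_{i\in I}$ of subcubes of $Q_0$ with pairwise disjoint interiors. $f^*$ denotes the decreasing rearrangement; $\|\gamma\|_{L(p,\infty)}=\sup_{s>0}s^{1/p}\gamma^*(s)$. $\|f\|_{GaRo_p}=\sup_{\{Q_i\}\in P}\frac{\sum_{i}\frac1{|Q_i|}\int_{Q_i}\int_{Q_i}|f(x)-f(y)|\,dx\,dy}{(\sum_i|Q_i|)^{1/p'}}$. For an r.i. space $X$, $\Gamma_f^X$ is the set of $\gamma\in X$ such that for all $\{Q_i\}\in P$, $\sum_{i}\frac1{|Q_i|}\int_{Q_i}\int_{Q_i}|f(x)-f(y)|\,dx\,dy\le\sum_i\int_{Q_i}\gamma$, and $\|f\|_{GaRo_X}=\inf\{\|\gamma\|_X:\gamma\in\Gamma_f^X\}$ (infinite if $\Gamma_f^X=\emptyset$). *)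

theory Defs
  imports "HOL-Analysis.Analysis"
begin

definition Q0 :: "'a::euclidean_space set" where
  "Q0 = box 0 One"

text \<open>Subcubes of Q0 with sides parallel to the axes (taken open; boundaries are null sets).\<close>
definition is_cube :: "'a::euclidean_space set \<Rightarrow> bool" where
  "is_cube Q \<longleftrightarrow> (\<exists>a h. h > 0 \<and> Q = box a (a + h *\<^sub>R One)) \<and> Q \<subseteq> Q0"

definition cube_families :: "'a::euclidean_space set set set" where
  "cube_families = {F. countable F \<and> (\<forall>Q\<in>F. is_cube Q) \<and> pairwise disjnt F}"

definition fam_sum :: "'b set \<Rightarrow> ('b \<Rightarrow> ennreal) \<Rightarrow> ennreal" where
  "fam_sum F g = (\<integral>\<^sup>+ Q. g Q \<partial>count_space F)"

definition osc :: "('a::euclidean_space \<Rightarrow> real) \<Rightarrow> 'a set \<Rightarrow> ennreal" where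
  "osc f Q = (\<integral>\<^sup>+ x\<in>Q. (\<integral>\<^sup>+ y\<in>Q. ennreal \<bar>f x - f y\<bar> \<partial>lborel) \<partial>lborel) / emeasure lborel Q"

definition conj_exp :: "real \<Rightarrow> real" where
  "conj_exp p = p / (p - 1)"

definition GaRo_p :: "real \<Rightarrow> ('a::euclidean_space \<Rightarrow> real) \<Rightarrow> ennreal" where
  "GaRo_p p f = (SUP F\<in>cube_families.
      fam_sum F (osc f) /
      ennreal ((enn2real (fam_sum F (emeasure lborel))) powr (1 / conj_exp p)))"

definition distr_fun :: "('a::euclidean_space \<Rightarrow> real) \<Rightarrow> real \<Rightarrow> ennreal" where
  "distr_fun \<gamma> t = emeasure lborel {x \<in> Q0. t < \<bar>\<gamma> x\<bar>}"

definition rearr :: "('a::euclidean_space \<Rightarrow> real) \<Rightarrow> real \<Rightarrow> ennreal" where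
  "rearr \<gamma> s = Inf {ennreal t | t. t \<ge> 0 \<and> distr_fun \<gamma> t \<le> ennreal s}"

definition Lpinf_norm :: "real \<Rightarrow> ('a::euclidean_space \<Rightarrow> real) \<Rightarrow> ennreal" where
  "Lpinf_norm p \<gamma> = (SUP s\<in>{0<..}. ennreal (s powr (1 / p)) * rearr \<gamma> s)"

definition in_Lpinf :: "real \<Rightarrow> ('a::euclidean_space \<Rightarrow> real) \<Rightarrow> bool" where
  "in_Lpinf p \<gamma> \<longleftrightarrow> set_borel_measurable lborel Q0 \<gamma> \<and> Lpinf_norm p \<gamma> < top"

definition Gamma_Lpinf :: "real \<Rightarrow> ('a::euclidean_space \<Rightarrow> real) \<Rightarrow> ('a \<Rightarrow> real) set" where
  "Gamma_Lpinf p f = {\<gamma>. in_Lpinf p \<gamma> \<and>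
     (\<forall>F\<in>cube_families.
        enn2ereal (fam_sum F (osc f)) \<le> ereal (\<Sum>\<^sub>\<infinity>Q\<in>F. (LINT x:Q|lborel. \<gamma> x)))}"

text \<open>The GaRo_X norm for X = L(p,\<infinity>) (Inf {} = top).\<close>
definition GaRo_Lpinf :: "real \<Rightarrow> ('a::euclidean_space \<Rightarrow> real) \<Rightarrow> ennreal" where
  "GaRo_Lpinf p f = (INF \<gamma>\<in>Gamma_Lpinf p f. Lpinf_norm p \<gamma>)"

end

theory Submission
  imports Defs
begin


lemma meas_set:
  fixes \<gamma> :: "'a::euclidean_space \<Rightarrow> real"
  assumes "set_borel_measurable lborel Q0 \<gamma>"
  shows "{x\<in>Q0. t < \<bar>\<gamma> x\<bar>} \<in> sets lborel"
proof -
  define g where "g = (\<lambda>x. (indicator Q0 x::real) *\<^sub>R \<gamma> x)"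
  have [measurable]: "g \<in> borel_measurable lborel" using assms unfolding set_borel_measurable_def g_def by simp
  have eq: "{x\<in>Q0. t < \<bar>\<gamma> x\<bar>} = Q0 \<inter> {x. t < \<bar>g x\<bar>}" by (auto simp: g_def indicator_def split: if_splits)
  have "Q0 \<in> sets lborel" unfolding Q0_def by simp
  moreover have "{x. t < \<bar>g x\<bar>} \<in> sets lborel" by measurable
  ultimately show ?thesis unfolding eq by blast
qed

lemma distr_mono:
  fixes \<gamma> :: "'a::euclidean_space \<Rightarrow> real"
  assumes "set_borel_measurable lborel Q0 \<gamma>" "t \<le> t'"
  shows "distr_fun \<gamma> t' \<le> distr_fun \<gamma> t"
  unfolding distr_fun_def
  by (rule emeasure_mono) (use assms meas_set in auto)

lemma weak_bound:
  fixes \<gamma> :: "'a::euclidean_space \<Rightarrow> real"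
  assumes meas: "set_borel_measurable lborel Q0 \<gamma>" and N: "Lpinf_norm p \<gamma> \<le> ennreal C"
    and p: "0 < p" and t: "0 < t" and C: "0 \<le> C"
  shows "distr_fun \<gamma> t \<le> ennreal ((C/t) powr p)"
proof (rule ennreal_le_epsilon)
  fix e :: real assume e: "0 < e"
  define s where "s = (C/t) powr p + e"
  have s0: "0 < s" using e unfolding s_def by (simp add: add_nonneg_pos)
  have "ennreal (s powr (1/p)) * rearr \<gamma> s \<le> Lpinf_norm p \<gamma>"
    unfolding Lpinf_norm_def using s0 by (intro SUP_upper) auto
  with N have A: "ennreal (s powr (1/p)) * rearr \<gamma> s \<le> ennreal C" by order
  have "C/t = ((C/t) powr p) powr (1/p)" using p C t by (simp add: powr_powr)
  also have "\<dots> < s powr (1/p)" using p e C t unfolding s_def by (intro powr_less_mono2) auto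
  finally have "C/t < s powr (1/p)" .
  hence Cl: "C < t * s powr (1/p)" using t by (simp add: field_simps)
  have "rearr \<gamma> s < ennreal t"
  proof (rule ccontr)
    assume "\<not> rearr \<gamma> s < ennreal t"
    hence "ennreal t \<le> rearr \<gamma> s" by simp
    hence "ennreal (s powr (1/p)) * ennreal t \<le> ennreal (s powr (1/p)) * rearr \<gamma> s"
      by (intro mult_left_mono) auto
    also note A
    finally have "ennreal (s powr (1/p) * t) \<le> ennreal C" by (subst ennreal_mult) (use t in auto)
    hence "s powr (1/p) * t \<le> C" using C by (simp add: ennreal_le_iff)
    with Cl show False by (simp add: mult.commute)
  qed
  then obtain t' where t': "ennreal t' < ennreal t" "t' \<ge> 0" "distr_fun \<gamma> t' \<le> ennreal s"
    unfolding rearr_def by (auto simp: Inf_less_iff)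
  have "t' \<le> t" using t' by (simp add: ennreal_less_iff)
  hence "distr_fun \<gamma> t \<le> distr_fun \<gamma> t'" by (rule distr_mono[OF meas])
  also note t'(3)
  also have "ennreal s = ennreal ((C/t) powr p) + ennreal e" unfolding s_def using e by (simp add: ennreal_plus)
  finally show "distr_fun \<gamma> t \<le> ennreal ((C/t) powr p) + ennreal e" .
qed



lemma pow_arith:
  fixes p C m :: real
  assumes p: "1 < p" and C: "0 < C" and m: "0 < m"
  defines "T \<equiv> C * m powr (-1/p)"
  shows "m * T + C powr p * (T powr (1-p) / (p-1)) = conj_exp p * C * m powr (1 / conj_exp p)"
proof -
  have q: "1 / conj_exp p = 1 - 1/p" using p unfolding conj_exp_def by (simp add: field_simps)
  have a: "m * T = C * m powr (1 - 1/p)"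
  proof -
    have "m powr (1/p) * m powr (1 - 1/p) = m" using m by (simp flip: powr_add)
    thus ?thesis unfolding T_def using m by (simp add: powr_minus_divide field_simps)
  qed
  have "T powr (1-p) = C powr (1-p) * (m powr (-1/p)) powr (1-p)"
    unfolding T_def using C m by (simp add: powr_mult)
  also have "(m powr (-1/p)) powr (1-p) = m powr (1 - 1/p)"
  proof -
    have "-1/p * (1-p) = 1 - 1/p" using p by (simp add: field_simps)
    thus ?thesis using m by (simp only: powr_powr)
  qed
  finally have b: "T powr (1-p) = C powr (1-p) * m powr (1 - 1/p)" .
  have c: "C powr p * C powr (1-p) = C" using C by (simp flip: powr_add)
  have "m * T + C powr p * (T powr (1-p) / (p-1)) = C * m powr (1 - 1/p) + C * m powr (1 - 1/p) / (p-1)"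
    unfolding a b using c by (simp add: field_simps)
  also have "\<dots> = p/(p-1) * C * m powr (1 - 1/p)" using p by (simp add: field_simps)
  finally show ?thesis using q by (simp add: conj_exp_def)
qed



lemma tail_integral:
  fixes p C T :: real
  assumes p: "1 < p" and T: "0 < T" and C: "0 \<le> C"
  shows "(\<integral>\<^sup>+t. ennreal (C powr p * t powr (-p)) * indicator {T..} t \<partial>lborel)
         = ennreal (C powr p * (T powr (1-p) / (p-1)))"
proof -
  have "((\<lambda>t. t powr (-p)) has_integral -(T powr (-p+1)) / (-p+1)) {T..}"
    using p T by (intro has_integral_powr_to_inf) auto
  hence "((\<lambda>t. C powr p * t powr (-p)) has_integral C powr p * (-(T powr (-p+1)) / (-p+1))) {T..}"
    by (rule has_integral_mult_right)
  moreover have "-(T powr (-p+1)) / (-p+1) = T powr (1-p) / (p-1)"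
    using p by (simp add: field_simps)
  ultimately have I: "((\<lambda>t. C powr p * t powr (-p)) has_integral C powr p * (T powr (1-p) / (p-1))) {T..}"
    by metis
  show ?thesis by (rule nn_integral_has_integral_lebesgue'[OF _ I]) auto
qed

lemma fubini_pair: "pair_sigma_finite (lborel::'a::euclidean_space measure) (lborel :: real measure)"
  by (intro pair_sigma_finite.intro lborel.sigma_finite_measure_axioms)

lemma layer_bound:
  fixes \<gamma> :: "'a::euclidean_space \<Rightarrow> real"
  assumes meas: "set_borel_measurable lborel Q0 \<gamma>" and N: "Lpinf_norm p \<gamma> \<le> ennreal C"
    and p: "1 < p" and C: "0 \<le> C"
    and E: "E \<in> sets lborel" "E \<subseteq> Q0" and mE: "emeasure lborel E = ennreal m" and m: "0 \<le> m"
  shows "(\<integral>\<^sup>+x. ennreal \<bar>\<gamma> x\<bar> * indicator E x \<partial>lborel)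
     \<le> ennreal (conj_exp p * C * m powr (1 / conj_exp p))"
proof (cases "m = 0")
  case True
  have "(\<integral>\<^sup>+x. ennreal \<bar>\<gamma> x\<bar> * indicator E x \<partial>lborel) \<le> (\<integral>\<^sup>+x. top * indicator E x \<partial>lborel)"
    by (intro nn_integral_mono) (auto simp: indicator_def)
  also have "\<dots> = 0" using E mE True by (simp add: nn_integral_cmult_indicator)
  finally show ?thesis by simp
next
  case False
  hence m0: "0 < m" using m by simp
  define G where "G = (\<lambda>x. \<bar>(indicator Q0 x::real) *\<^sub>R \<gamma> x\<bar>)"
  have [measurable]: "G \<in> borel_measurable lborel"
    using meas unfolding set_borel_measurable_def G_def by measurable
  have [measurable]: "E \<in> sets lborel" using E by simp
  define f where "f = (\<lambda>x t. indicator E x * (if 0 \<le> t \<and> t < G x then 1 else 0 :: ennreal))"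
  have fm: "case_prod f \<in> borel_measurable (lborel \<Otimes>\<^sub>M lborel)"
    unfolding f_def by measurable
  have s1: "(\<integral>\<^sup>+x. ennreal \<bar>\<gamma> x\<bar> * indicator E x \<partial>lborel) = (\<integral>\<^sup>+x. \<integral>\<^sup>+t. f x t \<partial>lborel \<partial>lborel)"
  proof (intro nn_integral_cong)
    fix x :: 'a
    have "(\<integral>\<^sup>+t. f x t \<partial>lborel) = (\<integral>\<^sup>+t. indicator E x * indicator {0..<G x} t \<partial>lborel)"
      unfolding f_def by (intro nn_integral_cong) (auto simp: indicator_def)
    also have "\<dots> = indicator E x * emeasure lborel {0..<G x}"
      by (simp add: nn_integral_cmult_indicator)
    also have "\<dots> = ennreal \<bar>\<gamma> x\<bar> * indicator E x"
      using E by (auto simp: G_def indicator_def)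
    finally show "ennreal \<bar>\<gamma> x\<bar> * indicator E x = (\<integral>\<^sup>+t. f x t \<partial>lborel)" by simp
  qed
  also have "\<dots> = (\<integral>\<^sup>+t. \<integral>\<^sup>+x. f x t \<partial>lborel \<partial>lborel)"
    using pair_sigma_finite.Fubini'[OF fubini_pair fm] by simp
  finally have s2: "(\<integral>\<^sup>+x. ennreal \<bar>\<gamma> x\<bar> * indicator E x \<partial>lborel) = (\<integral>\<^sup>+t. \<integral>\<^sup>+x. f x t \<partial>lborel \<partial>lborel)" .
  define T where "T = C * m powr (-1/p)"
  have T0: "0 \<le> T" using C unfolding T_def by simp
  define h where "h = (\<lambda>t. ennreal m * indicator {0..T} t + ennreal ((C/t) powr p) * indicator {T<..} t)"
  have inner: "(\<integral>\<^sup>+x. f x t \<partial>lborel) \<le> h t" for t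
  proof -
    consider "t < 0" | "0 \<le> t" "t \<le> T" | "T < t" by linarith
    then show ?thesis
    proof cases
      case 1
      hence "(\<integral>\<^sup>+x. f x t \<partial>lborel) = 0" unfolding f_def by simp
      thus ?thesis by simp
    next
      case 2
      have "(\<integral>\<^sup>+x. f x t \<partial>lborel) \<le> (\<integral>\<^sup>+x. indicator E x \<partial>lborel)"
        unfolding f_def by (intro nn_integral_mono) (auto simp: indicator_def)
      also have "\<dots> = ennreal m" using E mE by simp
      finally show ?thesis using 2 unfolding h_def by (simp add: indicator_def)
    next
      case 3
      hence t0: "0 < t" using T0 by simp
      have "(\<integral>\<^sup>+x. f x t \<partial>lborel) \<le> (\<integral>\<^sup>+x. indicator {x\<in>Q0. t < \<bar>\<gamma> x\<bar>} x \<partial>lborel)"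
        unfolding f_def using E(2) by (intro nn_integral_mono) (auto simp: indicator_def G_def)
      also have "\<dots> = distr_fun \<gamma> t" unfolding distr_fun_def using meas_set[OF meas] by simp
      also have "\<dots> \<le> ennreal ((C/t) powr p)" using weak_bound[OF meas N _ t0 C] p by simp
      finally show ?thesis using 3 T0 unfolding h_def by (simp add: indicator_def)
    qed
  qed
  have "(\<integral>\<^sup>+t. \<integral>\<^sup>+x. f x t \<partial>lborel \<partial>lborel) \<le> (\<integral>\<^sup>+t. h t \<partial>lborel)"
    by (intro nn_integral_mono inner)
  also have "\<dots> = (\<integral>\<^sup>+t. ennreal m * indicator {0..T} t \<partial>lborel)
      + (\<integral>\<^sup>+t. ennreal ((C/t) powr p) * indicator {T<..} t \<partial>lborel)"
    unfolding h_def by (intro nn_integral_add) auto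
  also have "(\<integral>\<^sup>+t. ennreal m * indicator {0..T} t \<partial>lborel) = ennreal (m * T)"
    using T0 m by (simp add: nn_integral_cmult_indicator ennreal_mult)
  also have "(\<integral>\<^sup>+t. ennreal ((C/t) powr p) * indicator {T<..} t \<partial>lborel)
       \<le> ennreal (C powr p * (T powr (1-p) / (p-1)))"
  proof (cases "C = 0")
    case True
    thus ?thesis by simp
  next
    case False
    hence C0: "0 < C" using C by simp
    hence T1: "0 < T" using m0 unfolding T_def by simp
    have "(\<integral>\<^sup>+t. ennreal ((C/t) powr p) * indicator {T<..} t \<partial>lborel)
       \<le> (\<integral>\<^sup>+t. ennreal (C powr p * t powr (-p)) * indicator {T..} t \<partial>lborel)"
    proof (intro nn_integral_mono)
      fix t :: real
      show "ennreal ((C/t) powr p) * indicator {T<..} t \<le> ennreal (C powr p * t powr (-p)) * indicator {T..} t"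
      proof (cases "T < t")
        case True
        hence "(C/t) powr p = C powr p * t powr (-p)" using T1 C
          by (simp add: powr_divide powr_minus_divide)
        thus ?thesis using True by (simp add: indicator_def)
      qed (simp add: indicator_def)
    qed
    also have "\<dots> = ennreal (C powr p * (T powr (1-p) / (p-1)))"
      by (rule tail_integral[OF p T1 C])
    finally show ?thesis .
  qed
  finally have "(\<integral>\<^sup>+t. \<integral>\<^sup>+x. f x t \<partial>lborel \<partial>lborel) \<le> ennreal (m * T) + ennreal (C powr p * (T powr (1-p) / (p-1)))"
    by simp
  also have "\<dots> = ennreal (m * T + C powr p * (T powr (1-p) / (p-1)))"
    using m T0 p by (subst ennreal_plus) auto
  also have "m * T + C powr p * (T powr (1-p) / (p-1)) = conj_exp p * C * m powr (1 / conj_exp p)"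
  proof (cases "C = 0")
    case True thus ?thesis unfolding T_def using p by simp
  next
    case False thus ?thesis unfolding T_def using pow_arith[OF p _ m0, of C] C by simp
  qed
  finally show ?thesis unfolding s2 .
qed



lemma norm_int_le:
  fixes f :: "'a \<Rightarrow> real"
  assumes "(\<integral>\<^sup>+x. ennreal (norm (f x)) \<partial>M) < top"
  shows "norm (integral\<^sup>L M f) \<le> enn2real (\<integral>\<^sup>+x. ennreal (norm (f x)) \<partial>M)"
proof (cases "integrable M f")
  case True
  hence "ennreal (norm (integral\<^sup>L M f)) \<le> (\<integral>\<^sup>+x. ennreal (norm (f x)) \<partial>M)"
    by (rule integral_norm_bound_ennreal)
  thus ?thesis using assms by (metis enn2real_ennreal enn2real_mono norm_ge_zero)
qed (simp add: not_integrable_integral_eq)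

lemma infsum_le_bound:
  fixes a :: "'b \<Rightarrow> real"
  assumes "\<And>F'. finite F' \<Longrightarrow> F' \<subseteq> F \<Longrightarrow> sum a F' \<le> K" and "0 \<le> K"
  shows "infsum a F \<le> K"
proof (cases "a summable_on F")
  case True
  hence "(sum a \<longlongrightarrow> infsum a F) (finite_subsets_at_top F)"
    using has_sum_infsum[OF True] by (simp only: has_sum_def)
  moreover have "eventually (\<lambda>F'. sum a F' \<le> K) (finite_subsets_at_top F)"
    by (rule eventually_finite_subsets_at_top_weakI) (rule assms(1))
  ultimately show ?thesis by (intro tendsto_upperbound) auto
qed (use assms in \<open>simp add: infsum_not_exists\<close>)

lemma cube_sets: "is_cube Q \<Longrightarrow> Q \<in> sets lborel \<and> Q \<subseteq> Q0"
  unfolding is_cube_def by auto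

lemma emeasure_Q0: "emeasure lborel (Q0::'a::euclidean_space set) = 1"
  unfolding Q0_def by (simp add: inner_Basis)

lemma family_bound:
  fixes f \<gamma> :: "'a::euclidean_space \<Rightarrow> real"
  assumes g: "\<gamma> \<in> Gamma_Lpinf p f" and F: "F \<in> cube_families" and p: "1 < p"
  shows "fam_sum F (osc f) \<le> ennreal (conj_exp p * enn2real (Lpinf_norm p \<gamma>)
           * (enn2real (fam_sum F (emeasure lborel))) powr (1 / conj_exp p))"
proof -
  have meas: "set_borel_measurable lborel Q0 \<gamma>" and Nt: "Lpinf_norm p \<gamma> < top"
    and gam: "enn2ereal (fam_sum F (osc f)) \<le> ereal (\<Sum>\<^sub>\<infinity>Q\<in>F. (LINT x:Q|lborel. \<gamma> x))"
    using g F unfolding Gamma_Lpinf_def in_Lpinf_def by auto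
  define C where "C = enn2real (Lpinf_norm p \<gamma>)"
  have C: "0 \<le> C" and NC: "Lpinf_norm p \<gamma> = ennreal C" using Nt unfolding C_def
    by (auto simp: less_top)
  have Fc: "countable F" and Fcube: "\<And>Q. Q \<in> F \<Longrightarrow> Q \<in> sets lborel \<and> Q \<subseteq> Q0"
    and Fd: "pairwise disjnt F"
    using F cube_sets unfolding cube_families_def by auto
  have Fdf: "disjoint_family_on id F" using Fd
    unfolding disjoint_family_on_def pairwise_def disjnt_def by auto
  define E where "E = \<Union>F"
  have Es: "E \<in> sets lborel" unfolding E_def using Fc Fcube by (intro sets.countable_Union) auto
  have EQ: "E \<subseteq> Q0" unfolding E_def using Fcube by auto
  have mE: "emeasure lborel E = fam_sum F (emeasure lborel)"
    unfolding E_def fam_sum_def using emeasure_UN_countable[of F id lborel] Fc Fcube Fdf by simp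
  have "emeasure lborel E \<le> emeasure lborel (Q0::'a set)"
    using EQ by (intro emeasure_mono) (auto simp: Q0_def)
  hence "emeasure lborel E < top" using emeasure_Q0 by (metis ennreal_one_less_top le_less_trans)
  then obtain m where m: "0 \<le> m" "emeasure lborel E = ennreal m"
    by (metis enn2real_nonneg ennreal_enn2real less_top)
  define K where "K = (\<integral>\<^sup>+x. ennreal \<bar>\<gamma> x\<bar> * indicator E x \<partial>lborel)"
  have KB: "K \<le> ennreal (conj_exp p * C * m powr (1 / conj_exp p))"
    unfolding K_def by (rule layer_bound[OF meas _ p C Es EQ m(2) m(1)]) (simp add: NC)
  hence Kt: "K < top" using ennreal_less_top le_less_trans by blast
  define g0 where "g0 = (\<lambda>x. (indicator Q0 x::real) *\<^sub>R \<gamma> x)"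
  have [measurable]: "g0 \<in> borel_measurable lborel" using meas unfolding set_borel_measurable_def g0_def .
  define b where "b = (\<lambda>Q. \<integral>\<^sup>+x. ennreal \<bar>\<gamma> x\<bar> * indicator Q x \<partial>lborel)"
  have bg: "b Q = (\<integral>\<^sup>+x. ennreal \<bar>g0 x\<bar> * indicator Q x \<partial>lborel)" if "Q \<in> F" for Q
    unfolding b_def using Fcube[OF that] by (intro nn_integral_cong) (auto simp: g0_def indicator_def)
  have sumb: "sum b F' \<le> K" if F': "finite F'" "F' \<subseteq> F" for F'
  proof -
    have "sum b F' = (\<Sum>Q\<in>F'. \<integral>\<^sup>+x. ennreal \<bar>g0 x\<bar> * indicator Q x \<partial>lborel)"
      using F' bg by (intro sum.cong) auto
    also have "\<dots> = (\<integral>\<^sup>+x. (\<Sum>Q\<in>F'. ennreal \<bar>g0 x\<bar> * indicator Q x) \<partial>lborel)"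
    proof (intro nn_integral_sum[symmetric])
      fix Q assume "Q \<in> F'"
      hence [measurable]: "Q \<in> sets lborel" using F' Fcube by auto
      show "(\<lambda>x. ennreal \<bar>g0 x\<bar> * indicator Q x) \<in> borel_measurable lborel" by measurable
    qed
    also have "\<dots> \<le> (\<integral>\<^sup>+x. ennreal \<bar>g0 x\<bar> * indicator E x \<partial>lborel)"
    proof (intro nn_integral_mono)
      fix x
      show "(\<Sum>Q\<in>F'. ennreal \<bar>g0 x\<bar> * indicator Q x) \<le> ennreal \<bar>g0 x\<bar> * indicator E x"
      proof (cases "\<exists>Q\<in>F'. x \<in> Q")
        case True
        then obtain Q where Q: "Q \<in> F'" "x \<in> Q" by blast
        have dF': "disjoint_family_on id F'" using Fdf F'(2) disjoint_family_on_mono by blast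
        have "(\<Sum>Q\<in>F'. ennreal \<bar>g0 x\<bar> * indicator Q x) = ennreal \<bar>g0 x\<bar>"
          using sum_indicator_disjoint_family[OF dF', of x Q "\<lambda>_. ennreal \<bar>g0 x\<bar>"] Q F' by simp
        moreover have "x \<in> E" using Q F' unfolding E_def by auto
        ultimately show ?thesis by simp
      next
        case False
        hence "(\<Sum>Q\<in>F'. ennreal \<bar>g0 x\<bar> * indicator Q x) = 0" by (intro sum.neutral) auto
        thus ?thesis by simp
      qed
    qed
    also have "\<dots> = K" unfolding K_def using EQ by (intro nn_integral_cong) (auto simp: g0_def indicator_def)
    finally show ?thesis .
  qed
  have bt: "b Q < top" if "Q \<in> F" for Q
    using sumb[of "{Q}"] that Kt by simp
  define a where "a = (\<lambda>Q. LINT x:Q|lborel. \<gamma> x)"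
  have ab: "a Q \<le> enn2real (b Q)" if "Q \<in> F" for Q
  proof -
    have eqb: "(\<integral>\<^sup>+x. ennreal (norm (indicator Q x *\<^sub>R \<gamma> x)) \<partial>lborel) = b Q"
      unfolding b_def by (intro nn_integral_cong) (auto simp: indicator_def)
    have "a Q \<le> norm (a Q)" by simp
    also have "\<dots> \<le> enn2real (b Q)"
      unfolding a_def set_lebesgue_integral_def using norm_int_le[where f="\<lambda>x. indicator Q x *\<^sub>R \<gamma> x" and M=lborel]
      eqb bt[OF that] by simp
    finally show ?thesis .
  qed
  have "infsum a F \<le> enn2real K"
  proof (rule infsum_le_bound)
    fix F' assume F': "finite F'" "F' \<subseteq> F"
    have "sum a F' \<le> sum (enn2real \<circ> b) F'" using ab F' by (intro sum_mono) auto
    also have "\<dots> = enn2real (sum b F')" using F' bt by (intro enn2real_sum[symmetric]) auto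
    also have "\<dots> \<le> enn2real K" using sumb[OF F'] Kt by (intro enn2real_mono) auto
    finally show "sum a F' \<le> enn2real K" .
  qed simp
  hence "enn2ereal (fam_sum F (osc f)) \<le> ereal (enn2real K)" using gam unfolding a_def by (meson ereal_less_eq(3) order_trans)
  also have "ereal (enn2real K) = enn2ereal K" using Kt
    by (metis enn2real_nonneg ennreal_enn2real enn2ereal_ennreal less_top)
  finally have "fam_sum F (osc f) \<le> K" by (simp add: less_eq_ennreal.rep_eq)
  hence "fam_sum F (osc f) \<le> ennreal (conj_exp p * C * m powr (1 / conj_exp p))" using KB by (rule order_trans)
  moreover have me: "enn2real (fam_sum F (emeasure lborel)) = m" using mE m by (metis enn2real_ennreal)
  ultimately show ?thesis unfolding C_def by simp
qed



theorem mainTheorem6: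
  fixes p :: real and f :: "'a::euclidean_space \<Rightarrow> real"
  assumes "1 < p"
    and "set_integrable lborel Q0 f"
  shows "GaRo_p p f \<le> ennreal (conj_exp p) * GaRo_Lpinf p f
    \<and> (GaRo_Lpinf p f < top \<longrightarrow> GaRo_p p f < top)"
proof -
  have p: "1 < p" by fact
  have cp: "0 < conj_exp p" using p unfolding conj_exp_def by simp
  define c where "c = ennreal (conj_exp p)"
  have c0: "c \<noteq> 0" "c < top" using cp unfolding c_def by auto
  have key: "GaRo_p p f \<le> c * Lpinf_norm p \<gamma>" if g: "\<gamma> \<in> Gamma_Lpinf p f" for \<gamma>
  proof -
    have Nt: "Lpinf_norm p \<gamma> < top" using g unfolding Gamma_Lpinf_def in_Lpinf_def by auto
    define C where "C = enn2real (Lpinf_norm p \<gamma>)"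
    have C: "0 \<le> C" and NC: "Lpinf_norm p \<gamma> = ennreal C" using Nt unfolding C_def
      by (auto simp: less_top)
    show ?thesis unfolding GaRo_p_def
    proof (rule SUP_least)
      fix F :: "'a set set" assume F: "F \<in> cube_families"
      define m where "m = enn2real (fam_sum F (emeasure lborel))"
      have m: "0 \<le> m" unfolding m_def by simp
      define r where "r = m powr (1 / conj_exp p)"
      have fb: "fam_sum F (osc f) \<le> ennreal (conj_exp p * C * r)"
        using family_bound[OF g F p] unfolding C_def m_def r_def .
      show "fam_sum F (osc f) / ennreal (enn2real (fam_sum F (emeasure lborel)) powr (1 / conj_exp p))
            \<le> c * Lpinf_norm p \<gamma>"
        unfolding m_def[symmetric] r_def[symmetric]
      proof (cases "r = 0")
        case True
        hence "fam_sum F (osc f) = 0" using fb by simp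
        thus "fam_sum F (osc f) / ennreal r \<le> c * Lpinf_norm p \<gamma>" by simp
      next
        case False
        hence r0: "0 < r" unfolding r_def by simp
        show "fam_sum F (osc f) / ennreal r \<le> c * Lpinf_norm p \<gamma>"
        proof (rule divide_le_posI_ennreal)
          show "0 < ennreal r" using r0 by simp
          have "ennreal (conj_exp p * C * r) = ennreal r * (c * Lpinf_norm p \<gamma>)"
          proof -
            have "ennreal (conj_exp p * C * r) = ennreal (conj_exp p) * ennreal C * ennreal r"
              using cp C r0 by (simp add: ennreal_mult)
            thus ?thesis unfolding c_def NC by (simp only: mult.commute mult.left_commute)
          qed
          thus "fam_sum F (osc f) \<le> ennreal r * (c * Lpinf_norm p \<gamma>)" using fb by simp
        qed
      qed
    qed
  qed
  have "GaRo_p p f / c \<le> GaRo_Lpinf p f"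
    unfolding GaRo_Lpinf_def
  proof (rule INF_greatest)
    fix \<gamma> assume "\<gamma> \<in> Gamma_Lpinf p f"
    show "GaRo_p p f / c \<le> Lpinf_norm p \<gamma>"
      by (rule divide_le_posI_ennreal) (use c0 key[OF \<open>\<gamma> \<in> Gamma_Lpinf p f\<close>] in \<open>auto simp: zero_less_iff_neq_zero\<close>)
  qed
  hence "GaRo_p p f / c * c \<le> GaRo_Lpinf p f * c" by (rule mult_right_mono) simp
  moreover have "GaRo_p p f / c * c = GaRo_p p f" using c0 by (simp add: ennreal_divide_times)
  ultimately have A: "GaRo_p p f \<le> c * GaRo_Lpinf p f" by (simp add: mult.commute)
  moreover have "GaRo_Lpinf p f < top \<longrightarrow> GaRo_p p f < top"
  proof
    assume "GaRo_Lpinf p f < top"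
    hence "c * GaRo_Lpinf p f < top" using c0 by (simp add: ennreal_mult_less_top)
    thus "GaRo_p p f < top" using A by (rule le_less_trans[rotated])
  qed
  ultimately show ?thesis unfolding c_def by simp
qed


end
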